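(* For real $m>0$ and $\epsilon$ with $m+2\epsilon>2$ and $\epsilon<2$, and $d=4+m/2-\epsilon$, define $$\Phi_{m,d}(v)=\frac{1}{2^{2+m}\pi^{(6+m-2\epsilon)/4}}\Bigg[\frac{\Gamma(1-\epsilon/2)}{\Gamma[(m+2)/4]}\,{}_1F_2\Big(1-\tfrac{\epsilon}{2};\tfrac12,\tfrac{m+2}{4};\tfrac{v^4}{64}\Big)-\frac{v^2\,\Gamma[(3-\epsilon)/2]}{4\,\Gamma(1+m/4)}\,{}_1F_2\Big(\tfrac{3-\epsilon}{2};\tfrac32,1+\tfrac{m}{4};\tfrac{v^4}{64}\Big)\Bigg].$$ Then for all real $v$, $$\Phi_{m,4+m/2-\epsilon}(v)=\frac{2^{-m-1}\pi^{(2\epsilon-6-m)/4}}{\Gamma[(m-2+2\epsilon)/4]}\int_0^1 dt\,t^{1-\epsilon}(1-t^2)^{(m-6+2\epsilon)/4}\,e^{-tv^2/4}.$$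
   Context: ${}_1F_2$ denotes the generalized hypergeometric function. $\Phi_{m,d}$ is the scaling function of the free Lifshitz-point propagator: the inverse Fourier transform of $(p^2+k^4)^{-1}$, $(\bm k,\bm p)\in\mathbb{R}^m\times\mathbb{R}^{d-m}$, equals $r^{-2+\epsilon}\Phi_{m,d}(z r^{-1/2})$ with $z=|\bm z|$, $r=|\bm r|$. *)

theory Defs
  imports "HOL-Analysis.Analysis"
begin

text \<open>Generalized hypergeometric function 1F2(a; b1, b2; x), defined by its power series
  (entire in x for parameters b1, b2 not in {0,-1,-2,...}).\<close>
definition hyp1F2 :: "real \<Rightarrow> real \<Rightarrow> real \<Rightarrow> real \<Rightarrow> real" where
  "hyp1F2 a b1 b2 x =
     (\<Sum>n. pochhammer a n / (pochhammer b1 n * pochhammer b2 n) * x ^ n / fact n)"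

definition Phi :: "real \<Rightarrow> real \<Rightarrow> real \<Rightarrow> real" where
  "Phi m eps v =
     1 / (2 powr (2 + m) * pi powr ((6 + m - 2 * eps) / 4)) *
     ( Gamma (1 - eps / 2) / Gamma ((m + 2) / 4) *
         hyp1F2 (1 - eps / 2) (1 / 2) ((m + 2) / 4) (v ^ 4 / 64)
     - v ^ 2 * Gamma ((3 - eps) / 2) / (4 * Gamma (1 + m / 4)) *
         hyp1F2 ((3 - eps) / 2) (3 / 2) (1 + m / 4) (v ^ 4 / 64))"

end

theory Submission
  imports Defs
begin

lemma pt_sq:
  fixes t p q :: real
  assumes "0 < t" "a = (p+1)/2"
  shows "(t^2) powr (a-1) * q * (2*t) = 2 * (t powr p * q)"
proof -
  have e: "t^2 = t powr 2" using assms(1) by (simp add: powr_realpow)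
  have "(t^2) powr (a-1) = t powr (2*(a-1))" unfolding e by (simp add: powr_powr)
  also have "2*(a-1) = p - 1" using assms(2) by simp
  finally have t2: "(t^2) powr (a-1) = t powr (p - 1)" .
  have "t powr (p-1) * t = t powr p" using assms(1) by (simp add: powr_diff)
  thus ?thesis by (simp add: t2 algebra_simps)
qed
lemma cancel2: fixes X :: ennreal and B :: real
  assumes "ennreal 2 * X = ennreal B" "B \<ge> 0" shows "X = ennreal (B/2)"
proof -
  have "ennreal (2 * (B/2)) = ennreal 2 * ennreal (B/2)" by (rule ennreal_mult) (use assms(2) in auto)
  hence "ennreal B = ennreal 2 * ennreal (B/2)" by simp
  with assms(1) have "ennreal 2 * X = ennreal 2 * ennreal (B/2)" by simp
  thus ?thesis by (simp add: ennreal_mult_cancel_left)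
qed

lemma beta_sq:
  fixes p y :: real assumes p: "p > -1" and y: "y > 0"
  shows "integrable lborel (\<lambda>t. indicator {0<..<1} t * (t powr p * (1 - t^2) powr (y-1)))"
    and "integral\<^sup>L lborel (\<lambda>t. indicator {0<..<1} t * (t powr p * (1 - t^2) powr (y-1))) = Beta ((p+1)/2) y / 2"
proof -
  define a where "a = (p+1)/2"
  have a: "a > 0" using p by (simp add: a_def)
  have H: "((\<lambda>s. s powr (a-1) * (1-s) powr (y-1)) has_integral Beta a y) {0..1}"
    using has_integral_Beta_real[OF a y] .
  define f where "f s = s powr (a-1) * (1-s) powr (y-1)" for s :: real
  have N1: "(\<integral>\<^sup>+s. ennreal (f s * indicator {0..1} s) \<partial>lborel) = ennreal (Beta a y)"
    using nn_integral_has_integral_lebesgue[OF _ H] by (simp add: f_def mult.commute)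
  have sub: "(\<integral>\<^sup>+s. ennreal (f s * indicator {0..1} s) \<partial>lborel) =
     (\<integral>\<^sup>+t. ennreal (f (t^2) * (2*t) * indicator {0..1} t) \<partial>lborel)"
  proof -
    have m: "set_borel_measurable borel {(0::real)^2..1^2} f" unfolding f_def set_borel_measurable_def by measurable
    have d: "\<And>x. x \<in> {0..1} \<Longrightarrow> ((\<lambda>t. t^2) has_real_derivative 2*x) (at x)"
      by (auto intro!: derivative_eq_intros)
    have c: "continuous_on {0..1} (\<lambda>t::real. 2*t)" by (intro continuous_intros)
    have "\<And>x::real. x \<in> {0..1} \<Longrightarrow> 0 \<le> 2*x" by auto
    from nn_integral_substitution[OF m d c this]
    show ?thesis by simp
  qed
  define g where "g t = indicator {0<..<1} t * (t powr p * (1 - t^2) powr (y-1))" for t :: real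
  have g0: "g t \<ge> 0" for t by (simp add: g_def)
  have gm: "g \<in> borel_measurable lborel" unfolding g_def by measurable
  have "(\<integral>\<^sup>+t. ennreal (f (t^2) * (2*t) * indicator {0..1} t) \<partial>lborel) = (\<integral>\<^sup>+t. ennreal 2 * ennreal (g t) \<partial>lborel)"
  proof (intro nn_integral_cong_AE)
    show "AE t in lborel. ennreal (f (t^2) * (2*t) * indicator {0..1} t) = ennreal 2 * ennreal (g t)"
      using AE_lborel_singleton[of 0] AE_lborel_singleton[of 1]
    proof eventually_elim
      case (elim t)
      show ?case
      proof (cases "0 < t \<and> t < 1")
        case True
        have E: "f (t^2) * (2*t) * indicator {0..1} t = 2 * g t"
          using True pt_sq[of t a p "(1 - t^2) powr (y-1)"] by (simp add: f_def g_def a_def)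
        hence "ennreal (f (t^2) * (2*t) * indicator {0..1} t) = ennreal (2 * g t)" by (simp only: E)
        thus ?thesis using g0[of t] by (simp add: ennreal_mult)
      next
        case False
        thus ?thesis using elim by (auto simp: indicator_def g_def)
      qed
    qed
  qed
  also have "\<dots> = ennreal 2 * (\<integral>\<^sup>+t. ennreal (g t) \<partial>lborel)"
    by (rule nn_integral_cmult) (use gm in auto)
  finally have F: "ennreal 2 * (\<integral>\<^sup>+t. ennreal (g t) \<partial>lborel) = ennreal (Beta a y)"
    using N1 sub by simp
  have B0: "Beta a y \<ge> 0" using a y by (simp add: Beta_def)
  have "(\<integral>\<^sup>+t. ennreal (g t) \<partial>lborel) = ennreal (Beta a y / 2)"
    using cancel2[OF F B0] .
  moreover have "Beta a y / 2 \<ge> 0" using B0 by simp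
  ultimately have "integrable lborel g \<and> integral\<^sup>L lborel g = Beta a y / 2"
    using nn_integral_eq_integrable[of g lborel "Beta a y / 2"] gm g0 by simp
  thus "integrable lborel (\<lambda>t. indicator {0<..<1} t * (t powr p * (1 - t^2) powr (y-1)))"
    and "integral\<^sup>L lborel (\<lambda>t. indicator {0<..<1} t * (t powr p * (1 - t^2) powr (y-1))) = Beta ((p+1)/2) y / 2"
    by (simp_all add: g_def[abs_def] a_def)
qed

lemma Beta_nonneg: "a > 0 \<Longrightarrow> b > 0 \<Longrightarrow> Beta a b \<ge> (0::real)"
  by (simp add: Beta_def)

lemma lbint01: fixes F :: "real \<Rightarrow> real" shows "(LBINT t=0..1. F t) = integral\<^sup>L lborel (\<lambda>t. indicator {0<..<1} t * F t)"
  by (simp add: interval_lebesgue_integral_def set_lebesgue_integral_def zero_ereal_def one_ereal_def)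

lemma series_int:
  fixes c y w :: real
  assumes c: "c > -1" and y: "y > 0" and w: "w \<ge> 0"
  shows "(\<lambda>k. (-w)^k / fact k * (Beta ((c + real k + 1)/2) y / 2)) sums
           (LBINT t=0..1. t powr c * (1 - t^2) powr (y-1) * exp (- (t * w)))"
    and "summable (\<lambda>k. w^k / fact k * (Beta ((c + real k + 1)/2) y / 2))"
proof -
  define h where "h k t = indicator {0<..<1} t * (t powr (c + real k) * (1 - t^2) powr (y-1))" for k :: nat and t :: real
  define f where "f k t = (-w)^k / fact k * h k t" for k :: nat and t :: real
  have hint: "integrable lborel (h k)" for k
    unfolding h_def[abs_def] using beta_sq(1)[of "c + real k" y] c y by simp
  have hval: "integral\<^sup>L lborel (h k) = Beta ((c + real k + 1)/2) y / 2" for k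
    unfolding h_def[abs_def] using beta_sq(2)[of "c + real k" y] c y by simp
  have h0: "h k t \<ge> 0" for k t by (simp add: h_def)
  have fint: "integrable lborel (f k)" for k
    unfolding f_def[abs_def] using hint by simp
  have fval: "integral\<^sup>L lborel (f k) = (-w)^k / fact k * (Beta ((c + real k + 1)/2) y / 2)" for k
    unfolding f_def[abs_def] integral_mult_right_zero hval by simp
  have nf: "norm (f k t) = w^k / fact k * h k t" for k t
    using h0[of k t] w by (simp add: f_def abs_mult power_abs)
  have nval: "(\<integral>t. norm (f k t) \<partial>lborel) = w^k / fact k * (Beta ((c + real k + 1)/2) y / 2)" for k
    unfolding nf integral_mult_right_zero hval by simp
  have Bmono: "Beta ((c + real k + 1)/2) y \<le> Beta ((c + 1)/2) y" for k
    by (rule Beta_real_mono) (use c y in auto)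
  have sumB: "summable (\<lambda>k. w^k / fact k * (Beta ((c + real k + 1)/2) y / 2))"
  proof (rule summable_comparison_test)
    show "summable (\<lambda>k. Beta ((c + 1)/2) y / 2 * (inverse (fact k) * w^k))"
      by (intro summable_mult summable_exp)
    show "\<exists>N. \<forall>n\<ge>N. norm (w^n / fact n * (Beta ((c + real n + 1)/2) y / 2))
          \<le> Beta ((c + 1)/2) y / 2 * (inverse (fact n) * w^n)"
    proof (intro exI allI impI)
      fix n :: nat
      have "(c + real n + 1)/2 > 0" using c by simp
      hence B0: "Beta ((c + real n + 1)/2) y \<ge> 0" using y by (rule Beta_nonneg)
      have "w^n / fact n \<ge> 0" using w by simp
      hence "w^n / fact n * Beta ((c + real n + 1)/2) y \<le> w^n / fact n * Beta ((c + 1)/2) y"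
        using Bmono[of n] by (intro mult_left_mono)
      thus "norm (w^n / fact n * (Beta ((c + real n + 1)/2) y / 2))
          \<le> Beta ((c + 1)/2) y / 2 * (inverse (fact n) * w^n)"
        using B0 w by (simp add: field_simps)
    qed
  qed
  thus "summable (\<lambda>k. w^k / fact k * (Beta ((c + real k + 1)/2) y / 2))" .
  have pw: "(\<lambda>k. f k t) sums (indicator {0<..<1} t * (t powr c * (1 - t^2) powr (y-1) * exp (- (t * w))))" for t
  proof (cases "0 < t \<and> t < 1")
    case True
 have aux: "(- (t * w))^k = t^k * (-w)^k" for k
      by (metis mult_minus_right power_mult_distrib)
    have e: "f k t = (t powr c * (1 - t^2) powr (y-1)) * ((- (t * w))^k /\<^sub>R fact k)" for k
      using True by (simp add: f_def h_def powr_add powr_realpow aux field_simps)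
    have "(\<lambda>k. (t powr c * (1 - t^2) powr (y-1)) * ((- (t * w))^k /\<^sub>R fact k)) sums
        ((t powr c * (1 - t^2) powr (y-1)) * exp (- (t * w)))"
      by (rule sums_mult[OF exp_converges])
    thus ?thesis unfolding e using True by simp
  next
    case False
    thus ?thesis by (simp add: f_def h_def)
  qed
  have sn: "summable (\<lambda>k. norm (f k t))" for t
  proof -
    have "(\<lambda>k. norm (f k t)) = (\<lambda>k. h 0 t * norm ((t * w)^k /\<^sub>R fact k))"
    proof
      fix k
      show "norm (f k t) = h 0 t * norm ((t * w)^k /\<^sub>R fact k)"
      proof (cases "0 < t \<and> t < 1")
        case True
        thus ?thesis using w unfolding nf
          by (simp add: h_def powr_add powr_realpow power_mult_distrib field_simps abs_mult)
      next
        case False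
        thus ?thesis unfolding nf by (simp add: h_def)
      qed
    qed
    thus ?thesis by (simp only:) (rule summable_mult[OF summable_norm_exp])
  qed
  have "(\<lambda>k. integral\<^sup>L lborel (f k)) sums (\<integral>t. (\<Sum>k. f k t) \<partial>lborel)"
  proof (rule sums_integral)
    show "integrable lborel (f i)" for i by (rule fint)
    show "AE x in lborel. summable (\<lambda>i. norm (f i x))" using sn by simp
    show "summable (\<lambda>i. \<integral>x. norm (f i x) \<partial>lborel)" unfolding nval by (rule sumB)
  qed
  moreover have "(\<lambda>t. \<Sum>k. f k t) = (\<lambda>t. indicator {0<..<1} t * (t powr c * (1 - t^2) powr (y-1) * exp (- (t * w))))"
    using pw by (simp add: sums_iff)
  ultimately show "(\<lambda>k. (-w)^k / fact k * (Beta ((c + real k + 1)/2) y / 2)) sums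
           (LBINT t=0..1. t powr c * (1 - t^2) powr (y-1) * exp (- (t * w)))"
    unfolding lbint01 fval by simp
qed

lemma Gamma_shift: assumes "(z::real) > 0" shows "Gamma (z + real n) = pochhammer z n * Gamma z"
proof -
  have "z \<notin> \<int>\<^sub>\<le>\<^sub>0" using assms by (auto dest: nonpos_Ints_nonpos)
  from pochhammer_Gamma[OF this, of n] have "pochhammer z n = Gamma (z + real n) / Gamma z" by simp
  moreover have "Gamma z \<noteq> 0" using Gamma_real_pos[OF assms] by simp
  ultimately show ?thesis by simp
qed

lemma split_eo:
  fixes a :: "nat \<Rightarrow> real" assumes s: "summable (\<lambda>n. \<bar>a n\<bar>)"
  shows "summable (\<lambda>n. a (2*n))" "summable (\<lambda>n. a (2*n+1))"
    "suminf a = (\<Sum>n. a (2*n)) + (\<Sum>n. a (2*n+1))"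
proof -
  define e where "e n = (if even n then \<bar>a n\<bar> else 0)" for n
  define od where "od n = (if odd n then \<bar>a n\<bar> else 0)" for n
  have "summable e" by (rule summable_comparison_test'[OF s, of 0]) (simp add: e_def)
  hence "summable (\<lambda>n. e (2*n))"
    by (subst summable_mono_reindex) (auto simp: strict_mono_def e_def elim!: evenE)
  hence se: "summable (\<lambda>n. \<bar>a (2*n)\<bar>)" by (simp add: e_def)
  have "summable od" by (rule summable_comparison_test'[OF s, of 0]) (simp add: od_def)
  hence "summable (\<lambda>n. od (2*n+1))"
    by (subst summable_mono_reindex) (auto simp: strict_mono_def od_def elim!: oddE)
  hence so: "summable (\<lambda>n. \<bar>a (2*n+1)\<bar>)" by (simp add: od_def)
  show E: "summable (\<lambda>n. a (2*n))" using se summable_norm_cancel[of "\<lambda>n. a (2*n)"] by simp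
  show O: "summable (\<lambda>n. a (2*n+1))" using so summable_norm_cancel[of "\<lambda>n. a (2*n+1)"] by simp
  from sums_if[OF summable_sums[OF O] summable_sums[OF E]]
  have "(\<lambda>n. if even n then a (2 * (n div 2)) else a (2 * ((n - 1) div 2) + 1)) sums
        ((\<Sum>n. a (2*n+1)) + (\<Sum>n. a (2*n)))" .
  moreover have "(\<lambda>n. if even n then a (2 * (n div 2)) else a (2 * ((n - 1) div 2) + 1)) = a"
    by (auto elim!: evenE oddE)
  ultimately show "suminf a = (\<Sum>n. a (2*n)) + (\<Sum>n. a (2*n+1))" by (simp add: sums_iff add.commute)
qed

lemma W1: "(-(v^2/4))^(2*n) = (v^4/64)^n * (4::real)^n"
proof -
  have "(-(v^2/4))^(2*n) = ((-(v^2/4))^2)^n" by (simp only: power_mult)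
  also have "(-(v^2/4))^2 = (v^4/64) * (4::real)" by (simp add: power2_eq_square power4_eq_xxxx)
  finally show ?thesis by (simp only: power_mult_distrib)
qed
lemma W2: "(-(v^2/4))^(2*n+1) = - (v^2/4) * ((v^4/64)^n * (4::real)^n)"
  using W1[of v n] by (simp only: power_Suc2 Suc_eq_plus1[symmetric]) simp
lemma fact2: "fact (2*n) = 4^n * pochhammer (1/2) n * (fact n :: real)"
  using fact_double[of n, where 'a=real] by (simp add: power_mult)
lemma p2: "2 powr (2+m) = 2 * 2 powr (m+1::real)"
proof -
  have "2 powr (2+m) = 2 powr (1 + (m+1))" by (simp add: add_ac)
  also have "\<dots> = 2 * 2 powr (m+1)" by (simp add: powr_add)
  finally show ?thesis .
qed

lemma consts_eq:
  fixes m eps :: real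
  shows "2 powr (-m-1) * pi powr ((2*eps-6-m)/4) = 2 * (1/(2 powr (2+m) * pi powr ((6+m-2*eps)/4)))"
proof -
  have a: "2 powr (2+m) = 2 * 2 powr (m+1)" by (rule p2)
  have b: "2 powr (-m-1) = inverse (2 powr (m+1))"
  proof -
    have "-m-1 = - (m+1)" by simp
    thus ?thesis by (simp only: powr_minus)
  qed
  have c: "pi powr ((2*eps-6-m)/4) = inverse (pi powr ((6+m-2*eps)/4))"
  proof -
    have "(2*eps-6-m)/4 = - ((6+m-2*eps)/4)" by (simp add: field_simps)
    thus ?thesis by (simp only: powr_minus)
  qed
  have "2 powr (m+1) > 0" "pi powr ((6+m-2*eps)/4) > 0" by simp_all
  thus ?thesis unfolding a b c by (simp add: divide_simps)
qed

lemma alg_even: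
  fixes A Gy G G' p q f F4 V r :: real
  assumes "Gy \<noteq> 0" "G' \<noteq> 0" "p \<noteq> 0" "q \<noteq> 0" "f \<noteq> 0" "F4 \<noteq> 0"
  shows "2 * A / Gy * (V * F4 / (F4 * p * f) * (r * G * Gy / (q * G') / 2)) = A * (G / G') * (r / (p * q) * V / f)"
  using assms by (simp add: field_simps)

lemma alg_odd:
  fixes A Gy G G' p q f F4 V r u :: real
  assumes "Gy \<noteq> 0" "G' \<noteq> 0" "p \<noteq> 0" "q \<noteq> 0" "f \<noteq> 0" "F4 \<noteq> 0"
  shows "2 * A / Gy * (- (u / 4) * (V * F4) / (F4 * p * f) * (r * G * Gy / (q * G') / 2)) = - (A * (u * G / (4 * G')) * (r / (p * q) * V / f))"
  using assms by (simp add: field_simps)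

lemma even_term:
  fixes m eps v :: real
  assumes m: "m > 0" and me: "m + 2*eps > 2" and e: "eps < 2"
  shows "2 powr (-m-1) * pi powr ((2*eps-6-m)/4) / Gamma ((m-2+2*eps)/4) *
     ((-(v^2/4))^(2*n) / fact (2*n) * (Beta ((1 - eps + real (2*n) + 1)/2) ((m-2+2*eps)/4) / 2))
   = 1/(2 powr (2+m) * pi powr ((6+m-2*eps)/4)) * (Gamma (1-eps/2)/Gamma((m+2)/4)) *
     (pochhammer (1-eps/2) n / (pochhammer (1/2) n * pochhammer ((m+2)/4) n) * (v^4/64)^n / fact n)"
proof -
  define A where "A = 1/(2 powr (2+m) * pi powr ((6+m-2*eps)/4))"
  define y where "y = (m-2+2*eps)/4"
  have y: "y > 0" using me by (simp add: y_def)
  have x: "(1 - eps + real (2*n) + 1)/2 = (1-eps/2) + real n" by simp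
  have xy: "(1-eps/2) + real n + y = (m+2)/4 + real n" by (simp add: y_def field_simps)
  have G1: "Gamma ((1-eps/2) + real n) = pochhammer (1-eps/2) n * Gamma (1-eps/2)"
    by (rule Gamma_shift) (use e in simp)
  have G2: "Gamma ((m+2)/4 + real n) = pochhammer ((m+2)/4) n * Gamma ((m+2)/4)"
    by (rule Gamma_shift) (use m in simp)
  have W: "(-(v^2/4))^(2*n) = (v^4/64)^n * 4^n"
    by (rule W1)
  have Fa: "fact (2*n) = 4^n * pochhammer (1/2) n * (fact n :: real)"
    by (rule fact2)
  have mp: "(m+2)/4 > 0" using m by simp
  have nz: "Gamma y \<noteq> 0" "Gamma ((m+2)/4) \<noteq> 0" "pochhammer (1/2) n \<noteq> (0::real)"
     "pochhammer ((m+2)/4) n \<noteq> (0::real)" "(fact n :: real) \<noteq> 0"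
  proof -
    show "Gamma y \<noteq> 0" using Gamma_real_pos[OF y] by linarith
    show "Gamma ((m+2)/4) \<noteq> 0" using Gamma_real_pos[OF mp] by linarith
    show "pochhammer (1/2) n \<noteq> (0::real)" using pochhammer_pos[of "1/2::real" n] by simp
    show "pochhammer ((m+2)/4) n \<noteq> (0::real)" using pochhammer_pos[of "(m+2)/4" n] mp by simp
    show "(fact n :: real) \<noteq> 0" by simp
  qed
  show ?thesis
    unfolding consts_eq A_def[symmetric] y_def[symmetric] x Beta_def xy G1 G2 W Fa
    apply (rule alg_even) using nz by simp_all
qed

lemma odd_term:
  fixes m eps v :: real
  assumes m: "m > 0" and me: "m + 2*eps > 2" and e: "eps < 2"
  shows "2 powr (-m-1) * pi powr ((2*eps-6-m)/4) / Gamma ((m-2+2*eps)/4) *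
     ((-(v^2/4))^(2*n+1) / fact (2*n+1) * (Beta ((1 - eps + real (2*n+1) + 1)/2) ((m-2+2*eps)/4) / 2))
   = - (1/(2 powr (2+m) * pi powr ((6+m-2*eps)/4)) * (v ^ 2 * Gamma ((3 - eps) / 2) / (4 * Gamma (1 + m / 4))) *
     (pochhammer ((3 - eps) / 2) n / (pochhammer (3/2) n * pochhammer (1 + m / 4) n) * (v^4/64)^n / fact n))"
proof -
  define A where "A = 1/(2 powr (2+m) * pi powr ((6+m-2*eps)/4))"
  define y where "y = (m-2+2*eps)/4"
  have y: "y > 0" using me by (simp add: y_def)
  have x: "(1 - eps + real (2*n+1) + 1)/2 = (3 - eps) / 2 + real n" by simp
  have xy: "(3 - eps) / 2 + real n + y = (1 + m / 4) + real n" by (simp add: y_def field_simps)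
  have G1: "Gamma ((3 - eps) / 2 + real n) = pochhammer ((3 - eps) / 2) n * Gamma ((3 - eps) / 2)"
    by (rule Gamma_shift) (use e in simp)
  have G2: "Gamma ((1 + m / 4) + real n) = pochhammer (1 + m / 4) n * Gamma (1 + m / 4)"
    by (rule Gamma_shift) (use m in simp)
  have W: "(-(v^2/4))^(2*n+1) = - (v^2/4) * ((v^4/64)^n * 4^n)"
    by (rule W2)
  have P32: "pochhammer (3/2) n = (2 * real n + 1) * pochhammer (1/2::real) n"
  proof -
    have "pochhammer (1/2::real) (Suc n) = 1/2 * pochhammer (3/2) n"
      by (simp add: pochhammer_rec)
    moreover have "pochhammer (1/2::real) (Suc n) = pochhammer (1/2) n * (1/2 + real n)"
      by (simp add: pochhammer_rec')
    ultimately show ?thesis by (simp add: field_simps)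
  qed
  have Fa: "fact (2*n+1) = 4^n * pochhammer (3/2) n * (fact n :: real)"
    unfolding P32 using fact2[of n] by (simp add: algebra_simps)
  have mp: "1 + m/4 > 0" using m by simp
  have nz: "Gamma y \<noteq> 0" "Gamma (1 + m / 4) \<noteq> 0" "pochhammer (3/2) n \<noteq> (0::real)"
     "pochhammer (1 + m / 4) n \<noteq> (0::real)" "(fact n :: real) \<noteq> 0"
  proof -
    show "Gamma y \<noteq> 0" using Gamma_real_pos[OF y] by linarith
    show "Gamma (1 + m / 4) \<noteq> 0" using Gamma_real_pos[OF mp] by linarith
    show "pochhammer (3/2) n \<noteq> (0::real)" using pochhammer_pos[of "3/2::real" n] by simp
    show "pochhammer (1 + m / 4) n \<noteq> (0::real)" using pochhammer_pos[of "1 + m / 4" n] mp by simp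
    show "(fact n :: real) \<noteq> 0" by simp
  qed
  show ?thesis
    unfolding consts_eq A_def[symmetric] y_def[symmetric] x Beta_def xy G1 G2 W Fa
    apply (rule alg_odd) using nz by simp_all
qed

lemma suminf_cmult_gen:
  fixes f :: "nat \<Rightarrow> real"
  assumes "summable (\<lambda>n. K * f n)" shows "(\<Sum>n. K * f n) = K * suminf f"
proof (cases "K = 0")
  case True thus ?thesis by simp
next
  case False
  hence "summable f" using assms summable_cmult_iff by blast
  thus ?thesis by (rule suminf_mult)
qed

theorem mainTheorem7:
  fixes m eps v :: real
  assumes "m > 0" and "m + 2 * eps > 2" and "eps < 2"
  shows "Phi m eps v =
    2 powr (- m - 1) * pi powr ((2 * eps - 6 - m) / 4) / Gamma ((m - 2 + 2 * eps) / 4) *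
    (LBINT t=0..1. t powr (1 - eps) * (1 - t ^ 2) powr ((m - 6 + 2 * eps) / 4) * exp (- t * v ^ 2 / 4))"
proof -
  define w where "w = v^2/4"
  define y where "y = (m-2+2*eps)/4"
  define c where "c = 1 - eps"
  have c: "c > -1" using assms by (simp add: c_def)
  have y: "y > 0" using assms by (simp add: y_def)
  have w: "w \<ge> 0" by (simp add: w_def)
  define a where "a k = (-w)^k / fact k * (Beta ((c + real k + 1)/2) y / 2)" for k
  define L where "L = (LBINT t=0..1. t powr c * (1 - t^2) powr (y-1) * exp (- (t * w)))"
  have aL: "a sums L" unfolding a_def[abs_def] L_def by (rule series_int(1)[OF c y w])
  have Lint: "(LBINT t=0..1. t powr (1 - eps) * (1 - t ^ 2) powr ((m - 6 + 2 * eps) / 4) * exp (- t * v ^ 2 / 4)) = L"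
  proof -
    have "(\<lambda>t. t powr (1 - eps) * (1 - t ^ 2) powr ((m - 6 + 2 * eps) / 4) * exp (- t * v ^ 2 / 4))
        = (\<lambda>t. t powr c * (1 - t^2) powr (y-1) * exp (- (t * w)))"
      by (simp add: c_def y_def w_def field_simps)
    thus ?thesis unfolding L_def by simp
  qed
  have absa: "summable (\<lambda>k. \<bar>a k\<bar>)"
  proof -
    have "\<bar>a k\<bar> = w^k / fact k * (Beta ((c + real k + 1)/2) y / 2)" for k
    proof -
      have "(c + real k + 1)/2 > 0" using c by simp
      hence "Beta ((c + real k + 1)/2) y \<ge> 0" using y by (rule Beta_nonneg)
      thus ?thesis using w by (simp add: a_def abs_mult power_abs)
    qed
    thus ?thesis using series_int(2)[OF c y w] by simp
  qed
  note S = split_eo[OF absa]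
  define P where "P = 2 powr (- m - 1) * pi powr ((2 * eps - 6 - m) / 4) / Gamma ((m - 2 + 2 * eps) / 4)"
  define A where "A = 1/(2 powr (2+m) * pi powr ((6+m-2*eps)/4))"
  define t1 where "t1 n = pochhammer (1-eps/2) n / (pochhammer (1/2) n * pochhammer ((m+2)/4) n) * (v^4/64)^n / fact n" for n
  define t2 where "t2 n = pochhammer ((3 - eps) / 2) n / (pochhammer (3/2) n * pochhammer (1 + m / 4) n) * (v^4/64)^n / fact n" for n
  define K1 where "K1 = A * (Gamma (1-eps/2)/Gamma((m+2)/4))"
  define K2 where "K2 = - (A * (v ^ 2 * Gamma ((3 - eps) / 2) / (4 * Gamma (1 + m / 4))))"
  have ev: "P * a (2*n) = K1 * t1 n" for n
    unfolding P_def a_def K1_def t1_def A_def c_def w_def y_def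
    by (rule even_term[OF assms])
  have od: "P * a (2*n+1) = K2 * t2 n" for n
    unfolding P_def a_def K2_def t2_def A_def c_def w_def y_def
    using odd_term[OF assms, of v n] by simp
  have se: "summable (\<lambda>n. K1 * t1 n)" using summable_mult[OF S(1), of P] unfolding ev .
  have so: "summable (\<lambda>n. K2 * t2 n)" using summable_mult[OF S(2), of P] unfolding od .
  have H1: "suminf t1 = hyp1F2 (1 - eps / 2) (1 / 2) ((m + 2) / 4) (v ^ 4 / 64)"
    unfolding hyp1F2_def t1_def[abs_def] ..
  have H2: "suminf t2 = hyp1F2 ((3 - eps) / 2) (3 / 2) (1 + m / 4) (v ^ 4 / 64)"
    unfolding hyp1F2_def t2_def[abs_def] ..
  have "P * L = P * suminf a" using aL by (simp add: sums_iff)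
  also have "\<dots> = (\<Sum>n. P * a (2*n)) + (\<Sum>n. P * a (2*n+1))"
    using S by (simp add: suminf_mult distrib_left)
  also have "\<dots> = K1 * suminf t1 + K2 * suminf t2"
    unfolding ev od using suminf_cmult_gen[OF se] suminf_cmult_gen[OF so] by simp
  also have "\<dots> = Phi m eps v"
    unfolding H1 H2 K1_def K2_def A_def Phi_def by (simp add: algebra_simps)
  finally show ?thesis unfolding Lint P_def[symmetric] ..
qed

end
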